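(* Consider the two systems of ODEs for scalar functions $p(z),q(z)$: \[ \text{(I)}\quad p'''= 6pp'+3q'+zp'+2p,\qquad q'''= 12pq'+6p'p''+3p''+4zq'-2q, \] \[ \text{(II)}\quad p'''= 3pp'+3q'+zp'+2p,\qquad q'''= 12pq'+6p'q+3p''+4zq'-2q. \] Each of the systems (I) and (II) possesses formal Laurent series solutions of the form \[ p=\sum_{i=-2}^{\infty}\alpha_i(z-a)^i,\qquad q=\sum_{i=-4}^{\infty}\beta_i(z-a)^i \] depending on six arbitrary parameters.
   Context: Primes denote derivatives with respect to $z$. The parameter count includes the pole position $a$. *)

theory Defs
  imports Complex_Main "HOL-Computational_Algebra.Formal_Laurent_Series"
begin

text \<open>Formal Laurent series are taken in the local variable t = z - a; the independent
  variable z is then the series a + t, and d/dz = d/dt (fls_deriv).\<close>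

definition zvar :: "complex \<Rightarrow> complex fls" where
  "zvar a = fls_const a + fls_X"

abbreviation D :: "complex fls \<Rightarrow> complex fls" where
  "D f \<equiv> fls_deriv f"

definition sysI :: "complex \<Rightarrow> complex fls \<Rightarrow> complex fls \<Rightarrow> bool" where
  "sysI a p q \<longleftrightarrow>
     D (D (D p)) = 6 * p * D p + 3 * D q + zvar a * D p + 2 * p \<and>
     D (D (D q)) = 12 * p * D q + 6 * D p * D (D p) + 3 * D (D p) + 4 * zvar a * D q - 2 * q"

definition sysII :: "complex \<Rightarrow> complex fls \<Rightarrow> complex fls \<Rightarrow> bool" where
  "sysII a p q \<longleftrightarrow>
     D (D (D p)) = 3 * p * D p + 3 * D q + zvar a * D p + 2 * p \<and>
     D (D (D q)) = 12 * p * D q + 6 * D p * q + 3 * D (D p) + 4 * zvar a * D q - 2 * q"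

definition laurent_shape :: "complex fls \<Rightarrow> complex fls \<Rightarrow> bool" where
  "laurent_shape p q \<longleftrightarrow>
     (\<forall>i < -2. fls_nth p i = 0) \<and> (\<forall>i < -4. fls_nth q i = 0) \<and> fls_nth p (-2) \<noteq> 0"

definition coeff_at :: "complex fls \<Rightarrow> complex fls \<Rightarrow> bool \<times> int \<Rightarrow> complex" where
  "coeff_at p q k = (if fst k then fls_nth p (snd k) else fls_nth q (snd k))"

text \<open>Six-parameter family of formal Laurent solutions: the pole position a is arbitrary,
  and there are five distinct coefficient positions whose values can be prescribed
  arbitrarily.\<close>
definition six_param_laurent :: "(complex \<Rightarrow> complex fls \<Rightarrow> complex fls \<Rightarrow> bool) \<Rightarrow> bool" where
  "six_param_laurent S \<longleftrightarrow>
     (\<exists>ks :: (bool \<times> int) list. length ks = 5 \<and> distinct ks \<and>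
        (\<forall>a :: complex. \<forall>cs :: complex list. length cs = 5 \<longrightarrow>
           (\<exists>p q. S a p q \<and> laurent_shape p q \<and>
                  (\<forall>j < 5. coeff_at p q (ks ! j) = cs ! j))))"

end

theory Submission
  imports Defs
begin

unbundle fps_syntax





definition vb :: "complex fls \<Rightarrow> int \<Rightarrow> bool" where
  "vb f L \<longleftrightarrow> (\<forall>i<L. f $$ i = 0)"

lemma vbD: "vb f L \<Longrightarrow> i < L \<Longrightarrow> f $$ i = 0" by (simp add: vb_def)
lemma vb_mono: "vb f L \<Longrightarrow> M \<le> L \<Longrightarrow> vb f M" by (simp add: vb_def)
lemma vb_add: "vb f L \<Longrightarrow> vb g L \<Longrightarrow> vb (f + g) L" by (simp add: vb_def)
lemma vb_diff: "vb f L \<Longrightarrow> vb g L \<Longrightarrow> vb (f - g) L" by (simp add: vb_def)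
lemma vb_num: "vb f L \<Longrightarrow> vb (numeral k * f) L" by (simp add: vb_def)
lemma vb_deriv: "vb f L \<Longrightarrow> M \<le> L - 1 \<Longrightarrow> vb (fls_deriv f) M" by (simp add: vb_def)
lemma vb_times: "vb f L \<Longrightarrow> vb g M \<Longrightarrow> N \<le> L + M \<Longrightarrow> vb (f * g) N"
proof -
  assume f: "vb f L" and g: "vb g M" and N: "N \<le> L + M"
  show ?thesis
  proof (cases "f = 0 \<or> g = 0")
    case True then show ?thesis by (auto simp: vb_def)
  next
    case False
    have "L \<le> fls_subdegree f" using False f by (intro fls_subdegree_geI) (auto simp: vb_def)
    moreover have "M \<le> fls_subdegree g" using False g by (intro fls_subdegree_geI) (auto simp: vb_def)
    ultimately show ?thesis using N by (auto simp: vb_def intro!: fls_times_nth_eq0)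
  qed
qed
lemma vb_zvar: "vb (zvar a) 0" by (simp add: vb_def zvar_def)

lemma vb_times_nth:
  assumes f: "vb f L" and g: "vb g M"
  shows "(f * g) $$ n = (\<Sum>i=L..n-M. f $$ i * g $$ (n - i))"
proof (cases "f = 0 \<or> g = 0")
  case True then show ?thesis by auto
next
  case False
  have L: "L \<le> fls_subdegree f" using False f by (intro fls_subdegree_geI) (auto simp: vb_def)
  have M: "M \<le> fls_subdegree g" using False g by (intro fls_subdegree_geI) (auto simp: vb_def)
  have "(f * g) $$ n = (\<Sum>i=fls_subdegree f..n - fls_subdegree g. f $$ i * g $$ (n - i))"
    by (rule fls_times_nth(2))
  also have "\<dots> = (\<Sum>i=L..n-M. f $$ i * g $$ (n - i))"
  proof (rule sum.mono_neutral_left)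
    show "{fls_subdegree f..n - fls_subdegree g} \<subseteq> {L..n - M}" using L M by auto
    show "\<forall>i\<in>{L..n - M} - {fls_subdegree f..n - fls_subdegree g}. f $$ i * g $$ (n - i) = 0"
    proof
      fix i assume "i \<in> {L..n - M} - {fls_subdegree f..n - fls_subdegree g}"
      then have "i < fls_subdegree f \<or> n - i < fls_subdegree g" by auto
      then show "f $$ i * g $$ (n - i) = 0" by (auto simp: nth_less_subdegree_zero)
    qed
  qed simp
  finally show ?thesis .
qed

lemma sum_unroll:
  "a \<le> b \<Longrightarrow> sum f {a..b::int} = f a + sum f {a+1..b}"
  "b < a \<Longrightarrow> sum f {a..b::int} = 0"
proof -
  assume "a \<le> b"
  then have "{a..b} = insert a {a+1..b}" by auto
  then show "sum f {a..b::int} = f a + sum f {a+1..b}" by simp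
qed simp

definition mon :: "complex \<Rightarrow> int \<Rightarrow> complex fls" where
  "mon c k = fls_shift (-k) (fls_const c)"

lemma mon_nth [simp]: "mon c k $$ n = (if n = k then c else 0)"
  by (simp add: mon_def)
lemma vb_mon: "M \<le> k \<Longrightarrow> vb (mon c k) M" by (simp add: vb_def)
lemma deriv_mon [simp]: "fls_deriv (mon c k) = mon (c * of_int k) (k - 1)"
  by (rule fls_eqI) (auto simp: algebra_simps)
lemma times_mon_nth [simp]: "(f * mon c k) $$ n = f $$ (n - k) * c"
  by (simp add: mon_def fls_shifted_times_simps)
lemma mon_times_nth [simp]: "(mon c k * f) $$ n = c * f $$ (n - k)"
  by (simp add: mon_def fls_shifted_times_simps)


lemma zvar_times_nth: "(zvar a * f) $$ n = a * f $$ n + f $$ (n - 1)"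
  by (simp add: zvar_def distrib_right fls_X_times_conv_shift)

lemma vb_D1: "vb f L \<Longrightarrow> vb (D f) (L - 1)" by (simp add: vb_def)
lemma vb_times': "vb f L \<Longrightarrow> vb g M \<Longrightarrow> vb (f * g) (L + M)" by (rule vb_times) auto
lemma vb_uminus: "vb f L \<Longrightarrow> vb (- f) L" by (simp add: vb_def)

definition E1I :: "complex \<Rightarrow> complex fls \<Rightarrow> complex fls \<Rightarrow> complex fls" where
  "E1I a p q = D (D (D p)) - (6 * p * D p + 3 * D q + zvar a * D p + 2 * p)"
definition E2I :: "complex \<Rightarrow> complex fls \<Rightarrow> complex fls \<Rightarrow> complex fls" where
  "E2I a p q = D (D (D q)) - (12 * p * D q + 6 * D p * D (D p) + 3 * D (D p) + 4 * zvar a * D q - 2 * q)"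
definition E1II :: "complex \<Rightarrow> complex fls \<Rightarrow> complex fls \<Rightarrow> complex fls" where
  "E1II a p q = D (D (D p)) - (3 * p * D p + 3 * D q + zvar a * D p + 2 * p)"
definition E2II :: "complex \<Rightarrow> complex fls \<Rightarrow> complex fls \<Rightarrow> complex fls" where
  "E2II a p q = D (D (D q)) - (12 * p * D q + 6 * D p * q + 3 * D (D p) + 4 * zvar a * D q - 2 * q)"

lemma sysI_iff: "sysI a p q \<longleftrightarrow> E1I a p q = 0 \<and> E2I a p q = 0"
  by (simp add: sysI_def E1I_def E2I_def)
lemma sysII_iff: "sysII a p q \<longleftrightarrow> E1II a p q = 0 \<and> E2II a p q = 0"
  by (simp add: sysII_def E1II_def E2II_def)

lemma E1I_nth:
  assumes hp: "vb p (-2)" and hq: "vb q (-4)"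
  shows "E1I a p q $$ n = of_int ((n+1)*(n+2)*(n+3)) * p$$(n+3) - (6 * (\<Sum>i=-2..n+3. p$$i * (of_int (n-i+1) * p$$(n-i+1))) + 3 * (of_int (n+1) * q$$(n+1)) + (a * (of_int (n+1) * p$$(n+1)) + of_int n * p$$n) + 2 * p$$n)"
proof -
  have 1: "vb (D p) (-3)" by (rule vb_deriv[OF hp]) simp
  show ?thesis
    unfolding E1I_def
    by (simp only: mult.assoc fls_minus_nth fls_plus_nth fls_mult_of_numeral_nth zvar_times_nth
      vb_times_nth[OF hp 1] fls_deriv_nth) (simp add: algebra_simps)
qed

lemma E1II_nth:
  assumes hp: "vb p (-2)" and hq: "vb q (-4)"
  shows "E1II a p q $$ n = of_int ((n+1)*(n+2)*(n+3)) * p$$(n+3) - (3 * (\<Sum>i=-2..n+3. p$$i * (of_int (n-i+1) * p$$(n-i+1))) + 3 * (of_int (n+1) * q$$(n+1)) + (a * (of_int (n+1) * p$$(n+1)) + of_int n * p$$n) + 2 * p$$n)"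
proof -
  have 1: "vb (D p) (-3)" by (rule vb_deriv[OF hp]) simp
  show ?thesis
    unfolding E1II_def
    by (simp only: mult.assoc fls_minus_nth fls_plus_nth fls_mult_of_numeral_nth zvar_times_nth
      vb_times_nth[OF hp 1] fls_deriv_nth) (simp add: algebra_simps)
qed

lemma E2I_nth:
  assumes hp: "vb p (-2)" and hq: "vb q (-4)"
  shows "E2I a p q $$ n = of_int ((n+1)*(n+2)*(n+3)) * q$$(n+3) - (12 * (\<Sum>i=-2..n+5. p$$i * (of_int (n-i+1) * q$$(n-i+1))) + 6 * (\<Sum>i=-3..n+4. (of_int (i+1) * p$$(i+1)) * (of_int ((n-i+1)*(n-i+2)) * p$$(n-i+2))) + 3 * (of_int((n+1)*(n+2)) * p$$(n+2)) + 4 * (a * (of_int (n+1) * q$$(n+1)) + of_int n * q$$n) - 2 * q$$n)"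
proof -
  have 1: "vb (D p) (-3)" by (rule vb_deriv[OF hp]) simp
  have 2: "vb (D q) (-5)" by (rule vb_deriv[OF hq]) simp
  have 3: "vb (D (D p)) (-4)" by (rule vb_deriv[OF 1]) simp
  show ?thesis
    unfolding E2I_def
    by (simp only: mult.assoc fls_minus_nth fls_plus_nth fls_mult_of_numeral_nth zvar_times_nth
      vb_times_nth[OF hp 2] vb_times_nth[OF 1 3] fls_deriv_nth) (simp add: algebra_simps)
qed

lemma E2II_nth:
  assumes hp: "vb p (-2)" and hq: "vb q (-4)"
  shows "E2II a p q $$ n = of_int ((n+1)*(n+2)*(n+3)) * q$$(n+3) - (12 * (\<Sum>i=-2..n+5. p$$i * (of_int (n-i+1) * q$$(n-i+1))) + 6 * (\<Sum>i=-3..n+4. (of_int (i+1) * p$$(i+1)) * q$$(n-i)) + 3 * (of_int((n+1)*(n+2)) * p$$(n+2)) + 4 * (a * (of_int (n+1) * q$$(n+1)) + of_int n * q$$n) - 2 * q$$n)"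
proof -
  have 1: "vb (D p) (-3)" by (rule vb_deriv[OF hp]) simp
  have 2: "vb (D q) (-5)" by (rule vb_deriv[OF hq]) simp
  show ?thesis
    unfolding E2II_def
    by (simp only: mult.assoc fls_minus_nth fls_plus_nth fls_mult_of_numeral_nth zvar_times_nth
      vb_times_nth[OF hp 2] vb_times_nth[OF 1 hq] fls_deriv_nth) (simp add: algebra_simps)
qed





lemma zvar_nth: "zvar a $$ n = (if n = 0 then a else if n = 1 then 1 else 0)"
  by (simp add: zvar_def)

lemma E1I_exp: "E1I a (p+u) (q+v) = E1I a p q + (D (D (D u)) - (6 * (p * D u + u * D p + u * D u) + 3 * D v + zvar a * D u + 2 * u))"
  by (simp add: E1I_def algebra_simps)
lemma E1II_exp: "E1II a (p+u) (q+v) = E1II a p q + (D (D (D u)) - (3 * (p * D u + u * D p + u * D u) + 3 * D v + zvar a * D u + 2 * u))"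
  by (simp add: E1II_def algebra_simps)
lemma E2I_exp: "E2I a (p+u) (q+v) = E2I a p q + (D (D (D v)) - (12 * (p * D v + u * D q + u * D v) + 6 * (D p * D (D u) + D u * D (D p) + D u * D (D u)) + 3 * D (D u) + 4 * (zvar a * D v) - 2 * v))"
  by (simp add: E2I_def algebra_simps)
lemma E2II_exp: "E2II a (p+u) (q+v) = E2II a p q + (D (D (D v)) - (12 * (p * D v + u * D q + u * D v) + 6 * (D u * q + D p * v + D u * v) + 3 * D (D u) + 4 * (zvar a * D v) - 2 * v))"
  by (simp add: E2II_def algebra_simps)

lemma E1_local_aux:
  assumes hp: "vb p (-2)" and hq: "vb q (-4)" and hu: "vb u L" and hv: "vb v (L-2)" and L: "0 \<le> L"
  shows "vb (D (D (D u)) - (6 * (p * D u + u * D p + u * D u) + 3 * D v + zvar a * D u + 2 * u)) (L-3)"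
    and "vb (D (D (D u)) - (3 * (p * D u + u * D p + u * D u) + 3 * D v + zvar a * D u + 2 * u)) (L-3)"
proof -
  have t1: "vb (D(D(D u))) (L-3)" by (rule vb_mono[OF vb_D1[OF vb_D1[OF vb_D1[OF hu]]]]) simp
  have t2: "vb (p * D u) (L-3)" by (rule vb_mono[OF vb_times'[OF hp vb_D1[OF hu]]]) simp
  have t3: "vb (u * D p) (L-3)" by (rule vb_mono[OF vb_times'[OF hu vb_D1[OF hp]]]) simp
  have t4: "vb (u * D u) (L-3)" by (rule vb_mono[OF vb_times'[OF hu vb_D1[OF hu]]]) (use L in simp)
  have t5: "vb (D v) (L-3)" by (rule vb_mono[OF vb_D1[OF hv]]) simp
  have t6: "vb (zvar a * D u) (L-3)" by (rule vb_mono[OF vb_times'[OF vb_zvar vb_D1[OF hu]]]) simp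
  have t7: "vb u (L-3)" by (rule vb_mono[OF hu]) simp
  show "vb (D (D (D u)) - (6 * (p * D u + u * D p + u * D u) + 3 * D v + zvar a * D u + 2 * u)) (L-3)"
    by (intro vb_diff vb_add vb_num t1 t2 t3 t4 t5 t6 t7)
  show "vb (D (D (D u)) - (3 * (p * D u + u * D p + u * D u) + 3 * D v + zvar a * D u + 2 * u)) (L-3)"
    by (intro vb_diff vb_add vb_num t1 t2 t3 t4 t5 t6 t7)
qed

lemma E2_local_aux:
  assumes hp: "vb p (-2)" and hq: "vb q (-4)" and hu: "vb u L" and hv: "vb v (L-2)" and L: "0 \<le> L"
  shows "vb (D (D (D v)) - (12 * (p * D v + u * D q + u * D v) + 6 * (D p * D (D u) + D u * D (D p) + D u * D (D u)) + 3 * D (D u) + 4 * (zvar a * D v) - 2 * v)) (L-5)"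
    and "vb (D (D (D v)) - (12 * (p * D v + u * D q + u * D v) + 6 * (D u * q + D p * v + D u * v) + 3 * D (D u) + 4 * (zvar a * D v) - 2 * v)) (L-5)"
proof -
  have t1: "vb (D(D(D v))) (L-5)" by (rule vb_mono[OF vb_D1[OF vb_D1[OF vb_D1[OF hv]]]]) simp
  have t2: "vb (p * D v) (L-5)" by (rule vb_mono[OF vb_times'[OF hp vb_D1[OF hv]]]) simp
  have t3: "vb (u * D q) (L-5)" by (rule vb_mono[OF vb_times'[OF hu vb_D1[OF hq]]]) simp
  have t4: "vb (u * D v) (L-5)" by (rule vb_mono[OF vb_times'[OF hu vb_D1[OF hv]]]) (use L in simp)
  have t5: "vb (D p * D (D u)) (L-5)" by (rule vb_mono[OF vb_times'[OF vb_D1[OF hp] vb_D1[OF vb_D1[OF hu]]]]) simp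
  have t6: "vb (D u * D (D p)) (L-5)" by (rule vb_mono[OF vb_times'[OF vb_D1[OF hu] vb_D1[OF vb_D1[OF hp]]]]) simp
  have t7: "vb (D u * D (D u)) (L-5)" by (rule vb_mono[OF vb_times'[OF vb_D1[OF hu] vb_D1[OF vb_D1[OF hu]]]]) (use L in simp)
  have t8: "vb (D u * q) (L-5)" by (rule vb_mono[OF vb_times'[OF vb_D1[OF hu] hq]]) simp
  have t9: "vb (D p * v) (L-5)" by (rule vb_mono[OF vb_times'[OF vb_D1[OF hp] hv]]) simp
  have t10: "vb (D u * v) (L-5)" by (rule vb_mono[OF vb_times'[OF vb_D1[OF hu] hv]]) (use L in simp)
  have t11: "vb (D (D u)) (L-5)" by (rule vb_mono[OF vb_D1[OF vb_D1[OF hu]]]) simp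
  have t12: "vb (zvar a * D v) (L-5)" by (rule vb_mono[OF vb_times'[OF vb_zvar vb_D1[OF hv]]]) simp
  have t13: "vb v (L-5)" by (rule vb_mono[OF hv]) simp
  show "vb (D (D (D v)) - (12 * (p * D v + u * D q + u * D v) + 6 * (D p * D (D u) + D u * D (D p) + D u * D (D u)) + 3 * D (D u) + 4 * (zvar a * D v) - 2 * v)) (L-5)"
    by (intro vb_diff vb_add vb_num t1 t2 t3 t4 t5 t6 t7 t8 t9 t10 t11 t12 t13)
  show "vb (D (D (D v)) - (12 * (p * D v + u * D q + u * D v) + 6 * (D u * q + D p * v + D u * v) + 3 * D (D u) + 4 * (zvar a * D v) - 2 * v)) (L-5)"
    by (intro vb_diff vb_add vb_num t1 t2 t3 t4 t5 t6 t7 t8 t9 t10 t11 t12 t13)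
qed

lemma E1I_local: "vb p (-2) \<Longrightarrow> vb q (-4) \<Longrightarrow> vb u L \<Longrightarrow> vb v (L-2) \<Longrightarrow> 0 \<le> L \<Longrightarrow> j < L-3 \<Longrightarrow> E1I a (p+u) (q+v) $$ j = E1I a p q $$ j"
proof -
  assume h: "vb p (-2)" "vb q (-4)" "vb u L" "vb v (L-2)" "0 \<le> L" and j: "j < L-3"
  show ?thesis unfolding E1I_exp fls_plus_nth using vbD[OF E1_local_aux(1)[OF h, of a] j] by simp
qed
lemma E1II_local: "vb p (-2) \<Longrightarrow> vb q (-4) \<Longrightarrow> vb u L \<Longrightarrow> vb v (L-2) \<Longrightarrow> 0 \<le> L \<Longrightarrow> j < L-3 \<Longrightarrow> E1II a (p+u) (q+v) $$ j = E1II a p q $$ j"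
proof -
  assume h: "vb p (-2)" "vb q (-4)" "vb u L" "vb v (L-2)" "0 \<le> L" and j: "j < L-3"
  show ?thesis unfolding E1II_exp fls_plus_nth using vbD[OF E1_local_aux(2)[OF h, of a] j] by simp
qed
lemma E2I_local: "vb p (-2) \<Longrightarrow> vb q (-4) \<Longrightarrow> vb u L \<Longrightarrow> vb v (L-2) \<Longrightarrow> 0 \<le> L \<Longrightarrow> j < L-5 \<Longrightarrow> E2I a (p+u) (q+v) $$ j = E2I a p q $$ j"
proof -
  assume h: "vb p (-2)" "vb q (-4)" "vb u L" "vb v (L-2)" "0 \<le> L" and j: "j < L-5"
  show ?thesis unfolding E2I_exp fls_plus_nth using vbD[OF E2_local_aux(1)[OF h, of a] j] by simp
qed
lemma E2II_local: "vb p (-2) \<Longrightarrow> vb q (-4) \<Longrightarrow> vb u L \<Longrightarrow> vb v (L-2) \<Longrightarrow> 0 \<le> L \<Longrightarrow> j < L-5 \<Longrightarrow> E2II a (p+u) (q+v) $$ j = E2II a p q $$ j"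
proof -
  assume h: "vb p (-2)" "vb q (-4)" "vb u L" "vb v (L-2)" "0 \<le> L" and j: "j < L-5"
  show ?thesis unfolding E2II_exp fls_plus_nth using vbD[OF E2_local_aux(2)[OF h, of a] j] by simp
qed

lemma E1I_split:
  assumes "p $$ (-2) = 1" "q $$ (-4) = 1" "1 \<le> k"
  shows "E1I a (p + mon x k) (q + mon y (k-2)) $$ (k-3) = E1I a p q $$ (k-3) + of_int (k*(k-1)*(k-2) - 6*(k-2)) * x + of_int (-3*(k-2)) * y"
  using assms unfolding E1I_exp
  by (simp only: fls_plus_nth fls_minus_nth fls_mult_of_numeral_nth deriv_mon times_mon_nth mon_times_nth zvar_times_nth fls_deriv_nth mon_nth)
     (simp add: algebra_simps zvar_nth)

lemma E1II_split:
  assumes "p $$ (-2) = 2" "q $$ (-4) = 2" "1 \<le> k"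
  shows "E1II a (p + mon x k) (q + mon y (k-2)) $$ (k-3) = E1II a p q $$ (k-3) + of_int (k*(k-1)*(k-2) - 6*(k-2)) * x + of_int (-3*(k-2)) * y"
  using assms unfolding E1II_exp
  by (simp only: fls_plus_nth fls_minus_nth fls_mult_of_numeral_nth deriv_mon times_mon_nth mon_times_nth zvar_times_nth fls_deriv_nth mon_nth)
     (simp add: algebra_simps zvar_nth)

lemma E2I_split:
  assumes "p $$ (-2) = 1" "q $$ (-4) = 1" "1 \<le> k"
  shows "E2I a (p + mon x k) (q + mon y (k-2)) $$ (k-5) = E2I a p q $$ (k-5) + of_int (48 + 12*k*(k-4)) * x + of_int ((k-2)*(k-3)*(k-4) - 12*(k-2)) * y"
  using assms unfolding E2I_exp
  by (simp only: fls_plus_nth fls_minus_nth fls_mult_of_numeral_nth deriv_mon times_mon_nth mon_times_nth zvar_times_nth fls_deriv_nth mon_nth)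
     (simp add: algebra_simps zvar_nth)

lemma E2II_split:
  assumes "p $$ (-2) = 2" "q $$ (-4) = 2" "1 \<le> k"
  shows "E2II a (p + mon x k) (q + mon y (k-2)) $$ (k-5) = E2II a p q $$ (k-5) + of_int (96 - 12*k) * x + of_int ((k-2)*(k-3)*(k-4) - 24*(k-2) + 24) * y"
  using assms unfolding E2II_exp
  by (simp only: fls_plus_nth fls_minus_nth fls_mult_of_numeral_nth deriv_mon times_mon_nth mon_times_nth zvar_times_nth fls_deriv_nth mon_nth)
     (simp add: algebra_simps zvar_nth)





type_synonym fop = "complex fls \<Rightarrow> complex fls \<Rightarrow> complex fls"

primrec stg :: "fop \<Rightarrow> fop \<Rightarrow> (int \<Rightarrow> complex) \<Rightarrow> (int \<Rightarrow> complex) \<Rightarrow> (int \<Rightarrow> complex) \<Rightarrow> (int \<Rightarrow> complex)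
   \<Rightarrow> int \<Rightarrow> complex fls \<Rightarrow> complex fls \<Rightarrow> nat \<Rightarrow> complex fls \<times> complex fls" where
  "stg E1 E2 A1 B1 A2 B2 k0 P0 Q0 0 = (P0, Q0)"
| "stg E1 E2 A1 B1 A2 B2 k0 P0 Q0 (Suc m) =
    (let S = stg E1 E2 A1 B1 A2 B2 k0 P0 Q0 m; k = k0 + int m;
         r1 = E1 (fst S) (snd S) $$ (k-3); r2 = E2 (fst S) (snd S) $$ (k-5);
         d = A1 k * B2 k - A2 k * B1 k
     in (fst S + mon ((B1 k * r2 - B2 k * r1) / d) k, snd S + mon ((A2 k * r1 - A1 k * r2) / d) (k-2)))"

lemma build:
  fixes Fa Fb :: fop and Aa Ba Ab Bb :: "int \<Rightarrow> complex"
  assumes loc1: "\<And>p q u v L j. vb p (-2) \<Longrightarrow> vb q (-4) \<Longrightarrow> vb u L \<Longrightarrow> vb v (L-2) \<Longrightarrow> 0 \<le> L \<Longrightarrow> j < L-3 \<Longrightarrow> Fa (p+u) (q+v) $$ j = Fa p q $$ j"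
  and loc2: "\<And>p q u v L j. vb p (-2) \<Longrightarrow> vb q (-4) \<Longrightarrow> vb u L \<Longrightarrow> vb v (L-2) \<Longrightarrow> 0 \<le> L \<Longrightarrow> j < L-5 \<Longrightarrow> Fb (p+u) (q+v) $$ j = Fb p q $$ j"
  and sp1: "\<And>p q x y k. p $$ (-2) = ap \<Longrightarrow> q $$ (-4) = bq \<Longrightarrow> 1 \<le> k \<Longrightarrow> Fa (p + mon x k) (q + mon y (k-2)) $$ (k-3) = Fa p q $$ (k-3) + Aa k * x + Ba k * y"
  and sp2: "\<And>p q x y k. p $$ (-2) = ap \<Longrightarrow> q $$ (-4) = bq \<Longrightarrow> 1 \<le> k \<Longrightarrow> Fb (p + mon x k) (q + mon y (k-2)) $$ (k-5) = Fb p q $$ (k-5) + Ab k * x + Bb k * y"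
  and det: "\<And>k. k0 \<le> k \<Longrightarrow> Aa k * Bb k - Ab k * Ba k \<noteq> 0"
  and k0: "1 \<le> k0"
  and P0: "vb P0 (-2)" "vb Q0 (-4)" "P0 $$ (-2) = ap" "Q0 $$ (-4) = bq"
  and Z1: "\<And>j. j < k0 - 3 \<Longrightarrow> Fa P0 Q0 $$ j = 0"
  and Z2: "\<And>j. j < k0 - 5 \<Longrightarrow> Fb P0 Q0 $$ j = 0"
  shows "\<exists>p q. Fa p q = 0 \<and> Fb p q = 0 \<and> vb p (-2) \<and> vb q (-4) \<and> p $$ (-2) = ap
     \<and> (\<forall>i<k0. p $$ i = P0 $$ i) \<and> (\<forall>i<k0-2. q $$ i = Q0 $$ i)"
proof -
  define S where "S = stg Fa Fb Aa Ba Ab Bb k0 P0 Q0"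
  define X where "X m = (let k = k0 + int m; r1 = Fa (fst (S m)) (snd (S m)) $$ (k-3); r2 = Fb (fst (S m)) (snd (S m)) $$ (k-5);
         d = Aa k * Bb k - Ab k * Ba k in (Ba k * r2 - Bb k * r1) / d)" for m
  define Y where "Y m = (let k = k0 + int m; r1 = Fa (fst (S m)) (snd (S m)) $$ (k-3); r2 = Fb (fst (S m)) (snd (S m)) $$ (k-5);
         d = Aa k * Bb k - Ab k * Ba k in (Ab k * r1 - Aa k * r2) / d)" for m
  have S0: "S 0 = (P0, Q0)" by (simp add: S_def)
  have SS: "fst (S (Suc m)) = fst (S m) + mon (X m) (k0 + int m)" "snd (S (Suc m)) = snd (S m) + mon (Y m) (k0 + int m - 2)" for m
    by (simp_all add: S_def X_def Y_def Let_def)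
  have inv1: "vb (fst (S m)) (-2) \<and> vb (snd (S m)) (-4) \<and> fst (S m) $$ (-2) = ap \<and> snd (S m) $$ (-4) = bq" for m
  proof (induction m)
    case 0 then show ?case using P0 by (simp add: S0)
  next
    case (Suc m)
    then show ?case using k0 by (auto simp: SS intro!: vb_add vb_mon)
  qed
  have inv2: "(\<forall>j < k0 + int m - 3. Fa (fst (S m)) (snd (S m)) $$ j = 0) \<and> (\<forall>j < k0 + int m - 5. Fb (fst (S m)) (snd (S m)) $$ j = 0)" for m
  proof (induction m)
    case 0 then show ?case using Z1 Z2 by (simp add: S0)
  next
    case (Suc m)
    define k where "k = k0 + int m"
    have k1: "1 \<le> k" "0 \<le> k" using k0 by (simp_all add: k_def)
    note I = inv1[of m]
    have vu: "vb (mon (X m) k) k" and vv: "vb (mon (Y m) (k-2)) (k-2)" by (simp_all add: vb_mon)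
    have d: "Aa k * Bb k - Ab k * Ba k \<noteq> 0" using det[of k] by (simp add: k_def)
    have e1: "Fa (fst (S (Suc m))) (snd (S (Suc m))) $$ j = 0" if j: "j < k0 + int (Suc m) - 3" for j
    proof (cases "j < k - 3")
      case True
      then show ?thesis using Suc.IH loc1[OF conjunct1[OF I] conjunct1[OF conjunct2[OF I]] vu vv k1(2) True]
        by (simp add: SS k_def)
    next
      case False
      then have jj: "j = k - 3" using j by (simp add: k_def)
      show ?thesis unfolding jj SS k_def[symmetric] sp1[OF conjunct1[OF conjunct2[OF conjunct2[OF I]]] conjunct2[OF conjunct2[OF conjunct2[OF I]]] k1(1)]
        using d by (simp add: X_def Y_def Let_def k_def[symmetric] field_simps)
    qed
    have e2: "Fb (fst (S (Suc m))) (snd (S (Suc m))) $$ j = 0" if j: "j < k0 + int (Suc m) - 5" for j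
    proof (cases "j < k - 5")
      case True
      then show ?thesis using Suc.IH loc2[OF conjunct1[OF I] conjunct1[OF conjunct2[OF I]] vu vv k1(2) True]
        by (simp add: SS k_def)
    next
      case False
      then have jj: "j = k - 5" using j by (simp add: k_def)
      show ?thesis unfolding jj SS k_def[symmetric] sp2[OF conjunct1[OF conjunct2[OF conjunct2[OF I]]] conjunct2[OF conjunct2[OF conjunct2[OF I]]] k1(1)]
        using d by (simp add: X_def Y_def Let_def k_def[symmetric] field_simps)
    qed
    show ?case using e1 e2 by blast
  qed
  have agr: "(\<forall>i < k0 + int m. fst (S (m + n)) $$ i = fst (S m) $$ i) \<and> (\<forall>i < k0 + int m - 2. snd (S (m + n)) $$ i = snd (S m) $$ i)" for m n
    by (induction n) (auto simp: SS)
  define p where "p = Abs_fls (\<lambda>i. fst (S (nat (i - k0 + 1))) $$ i)"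
  define q where "q = Abs_fls (\<lambda>i. snd (S (nat (i - k0 + 3))) $$ i)"
  have pn: "p $$ i = fst (S (nat (i - k0 + 1))) $$ i" for i
    unfolding p_def by (rule nth_Abs_fls_lower_bound[of "-2"]) (use inv1 in \<open>auto simp: vb_def\<close>)
  have qn: "q $$ i = snd (S (nat (i - k0 + 3))) $$ i" for i
    unfolding q_def by (rule nth_Abs_fls_lower_bound[of "-4"]) (use inv1 in \<open>auto simp: vb_def\<close>)
  have pM: "p $$ i = fst (S M) $$ i" if "i < k0 + int M" for i M
  proof -
    define N where "N = nat (i - k0 + 1)"
    have iN: "i < k0 + int N" by (simp add: N_def)
    show ?thesis
    proof (cases "N \<le> M")
      case True
      then have "M = N + (M - N)" by simp
      then have "fst (S M) $$ i = fst (S N) $$ i" using agr[of N "M - N"] iN by metis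
      then show ?thesis by (simp add: pn N_def)
    next
      case False
      then have "N = M + (N - M)" by simp
      then have "fst (S N) $$ i = fst (S M) $$ i" using agr[of M "N - M"] that by metis
      then show ?thesis by (simp add: pn N_def)
    qed
  qed
  have qM: "q $$ i = snd (S M) $$ i" if "i < k0 + int M - 2" for i M
  proof -
    define N where "N = nat (i - k0 + 3)"
    have iN: "i < k0 + int N - 2" by (simp add: N_def)
    show ?thesis
    proof (cases "N \<le> M")
      case True
      then have "M = N + (M - N)" by simp
      then have "snd (S M) $$ i = snd (S N) $$ i" using agr[of N "M - N"] iN by metis
      then show ?thesis by (simp add: qn N_def)
    next
      case False
      then have "N = M + (N - M)" by simp
      then have "snd (S N) $$ i = snd (S M) $$ i" using agr[of M "N - M"] that by metis
      then show ?thesis by (simp add: qn N_def)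
    qed
  qed
  have close: "Fa p q $$ j = 0 \<and> Fb p q $$ j = 0" for j
  proof -
    define M where "M = nat (j - k0 + 6)"
    define L where "L = k0 + int M"
    have L: "0 \<le> L" "j < L - 5" using k0 by (auto simp: L_def M_def)
    have vu: "vb (p - fst (S M)) L" using pM by (simp add: vb_def L_def)
    have vv: "vb (q - snd (S M)) (L - 2)" using qM by (simp add: vb_def L_def)
    have pe: "p = fst (S M) + (p - fst (S M))" and qe: "q = snd (S M) + (q - snd (S M))" by simp_all
    note I = inv1[of M]
    have "Fa p q $$ j = Fa (fst (S M)) (snd (S M)) $$ j"
      using loc1[OF conjunct1[OF I] conjunct1[OF conjunct2[OF I]] vu vv L(1), of j] L(2) pe qe by simp
    moreover have "Fb p q $$ j = Fb (fst (S M)) (snd (S M)) $$ j"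
      using loc2[OF conjunct1[OF I] conjunct1[OF conjunct2[OF I]] vu vv L(1), of j] L(2) pe qe by simp
    ultimately show ?thesis using inv2[of M] L by (simp add: L_def)
  qed
  have "Fa p q = 0" "Fb p q = 0" using close by (auto intro: fls_eqI)
  moreover have "vb p (-2)" "vb q (-4)" "p $$ (-2) = ap"
    using inv1 k0 by (auto simp: vb_def pn qn)
  moreover have "\<forall>i<k0. p $$ i = P0 $$ i" using pM[of _ 0] by (simp add: S0)
  moreover have "\<forall>i<k0-2. q $$ i = Q0 $$ i" using qM[of _ 0] by (simp add: S0)
  ultimately show ?thesis by blast
qed





definition tpI :: "complex \<Rightarrow> complex \<Rightarrow> complex \<Rightarrow> complex \<Rightarrow> complex \<Rightarrow> complex \<Rightarrow> int \<Rightarrow> complex" where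
  "tpI a c1 c2 c3 c4 c5 n = (if n = (-2) then (1) else if n = 0 then (- (1/3)*a) else if n = 1 then (c1) else if n = 2 then (c2) else if n = 3 then (- (1/18)*a - (1/3)*a*c1) else if n = 4 then (c4) else if n = 5 then ((1/288)*a^2 + (1/48)*a^2*c1 + (3/4)*c1*c2 + (11/48)*c2 + (1/16)*c3) else if n = 6 then (c5) else 0)"

definition tqI :: "complex \<Rightarrow> complex \<Rightarrow> complex \<Rightarrow> complex \<Rightarrow> complex \<Rightarrow> complex \<Rightarrow> int \<Rightarrow> complex" where
  "tqI a c1 c2 c3 c4 c5 n = (if n = (-4) then (1) else if n = (-2) then ((1/3)*a) else if n = (-1) then (- 2*c1) else if n = 0 then (c3) else if n = 1 then ((2/9)*a + (1/3)*a*c1) else if n = 2 then ((1/3)*a*c2 - (1/2)*c1 - c1^2 + 2*c4) else if n = 3 then (- (1/432)*a^2 - (1/72)*a^2*c1 + (3/2)*c1*c2 + (5/8)*c2 + (7/24)*c3) else if n = 4 then ((5/216)*a + (1/4)*a*c1 + (2/3)*a*c1^2 + (1/3)*a*c4 - c2^2 + 8*c5) else 0)"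

definition tpII :: "complex \<Rightarrow> complex \<Rightarrow> complex \<Rightarrow> complex \<Rightarrow> complex \<Rightarrow> complex \<Rightarrow> int \<Rightarrow> complex" where
  "tpII a c1 c2 c3 c4 c5 n = (if n = (-2) then (2) else if n = 0 then (c1) else if n = 1 then (c2) else if n = 2 then (c3) else if n = 3 then ((1/9)*a + (1/3)*a*c2 + (1/3)*c1 + c1*c2) else if n = 4 then (c4) else if n = 5 then ((3/40)*a*c1 + (1/8)*a*c1*c2 + (7/720)*a^2 + (1/48)*a^2*c2 + (11/80)*c1^2 + (3/16)*c1^2*c2 + (3/8)*c2*c3 + (1/24)*c3) else if n = 6 then ((1/1620)*a + (1/30)*a*c2 + (1/12)*a*c2^2 + (1/180)*c1 + (2/15)*c1*c2 + (1/4)*c1*c2^2 + (1/6)*c3^2) else if n = 7 then (- (29/840)*a*c1^2 - (3/56)*a*c1^2*c2 + (3/28)*a*c2*c3 + (47/1260)*a*c3 - (5/504)*a^2*c1 - (1/56)*a^2*c1*c2 - (1/1080)*a^3 - (1/504)*a^3*c2 + (9/28)*c1*c2*c3 + (3/20)*c1*c3 - (11/280)*c1^3 - (3/56)*c1^3*c2 + (1/140)*c2 + (3/70)*c2^2 + (1/28)*c2^3 - (2/25)*c4) else if n = 8 then (c5) else 0)"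

definition tqII :: "complex \<Rightarrow> complex \<Rightarrow> complex \<Rightarrow> complex \<Rightarrow> complex \<Rightarrow> complex \<Rightarrow> int \<Rightarrow> complex" where
  "tqII a c1 c2 c3 c4 c5 n = (if n = (-4) then (2) else if n = (-2) then (- (2/3)*a - 2*c1) else if n = (-1) then (- 2*c2) else if n = 0 then ((4/3)*a*c1 + (2/9)*a^2 + 2*c1^2 - 3*c3) else if n = 1 then (- (1/3)*a*c2 - (2/3)*c1 - c1*c2) else if n = 2 then (- (1/3)*a*c3 - c1*c3 - (1/2)*c2 - (1/2)*c2^2 + 2*c4) else if n = 3 then ((23/180)*a*c1 - (1/12)*a*c1*c2 + (1/120)*a^2 - (1/72)*a^2*c2 + (37/120)*c1^2 - (1/8)*c1^2*c2 + (3/4)*c2*c3 - (1/4)*c3) else if n = 4 then (- (67/1620)*a + (1/60)*a*c2 + (1/3)*a*c2^2 - (1/3)*a*c4 - (17/180)*c1 + (19/60)*c1*c2 + c1*c2^2 - c1*c4 + (5/6)*c3^2) else if n = 5 then (- (899/1680)*a*c1^2 - (93/112)*a*c1^2*c2 + (139/168)*a*c2*c3 + (271/840)*a*c3 - (155/1008)*a^2*c1 - (31/112)*a^2*c1*c2 - (31/2160)*a^3 - (31/1008)*a^3*c2 + (139/56)*c1*c2*c3 + (57/40)*c1*c3 - (341/560)*c1^3 - (93/112)*c1^3*c2 + (3/35)*c2 - c2*c4 + (18/35)*c2^2 + (3/7)*c2^3 - (34/25)*c4) else if n = 6 then (- (89/1296)*a*c1 - (61/144)*a*c1*c2 - (5/8)*a*c1*c2^2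 - (1/18)*a*c3^2 - (79/7776)*a^2 - (19/288)*a^2*c2 - (5/48)*a^2*c2^2 - (1/6)*c1*c3^2 - (11/96)*c1^2 - (65/96)*c1^2*c2 - (15/16)*c1^2*c2^2 - (3/16)*c2*c3 - (3/8)*c2^2*c3 - (7/432)*c3 - c3*c4 + (50/3)*c5) else 0)"



definition TPI where "TPI a c1 c2 c3 c4 c5 = Abs_fls (tpI a c1 c2 c3 c4 c5)"
definition TQI where "TQI a c1 c2 c3 c4 c5 = Abs_fls (tqI a c1 c2 c3 c4 c5)"
lemma TPI_nth: "TPI a c1 c2 c3 c4 c5 $$ n = tpI a c1 c2 c3 c4 c5 n"
  unfolding TPI_def by (rule nth_Abs_fls_lower_bound[of "-2"]) (simp add: tpI_def)
lemma TQI_nth: "TQI a c1 c2 c3 c4 c5 $$ n = tqI a c1 c2 c3 c4 c5 n"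
  unfolding TQI_def by (rule nth_Abs_fls_lower_bound[of "-4"]) (simp add: tqI_def)
lemma vb_TPI: "vb (TPI a c1 c2 c3 c4 c5) (-2)" by (simp add: vb_def TPI_nth tpI_def)
lemma vb_TQI: "vb (TQI a c1 c2 c3 c4 c5) (-4)" by (simp add: vb_def TQI_nth tqI_def)

lemma vb_E1I: "vb p (-2) \<Longrightarrow> vb q (-4) \<Longrightarrow> vb (E1I a p q) (-5)"
  by (auto simp: vb_def E1I_nth sum_unroll(2))
lemma vb_E2I: "vb p (-2) \<Longrightarrow> vb q (-4) \<Longrightarrow> vb (E2I a p q) (-7)"
  by (auto simp: vb_def E2I_nth sum_unroll(2))

lemma E1I_T_5: "E1I a (TPI a c1 c2 c3 c4 c5) (TQI a c1 c2 c3 c4 c5) $$ (-5) = 0"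
  by (simp add: E1I_nth vb_TPI vb_TQI sum_unroll ; simp add: TPI_nth TQI_nth tpI_def tqI_def ;
      simp add: field_simps power2_eq_square power3_eq_cube)

lemma E1I_T_6: "E1I a (TPI a c1 c2 c3 c4 c5) (TQI a c1 c2 c3 c4 c5) $$ (-4) = 0"
  by (simp add: E1I_nth vb_TPI vb_TQI sum_unroll ; simp add: TPI_nth TQI_nth tpI_def tqI_def ;
      simp add: field_simps power2_eq_square power3_eq_cube)

lemma E1I_T_7: "E1I a (TPI a c1 c2 c3 c4 c5) (TQI a c1 c2 c3 c4 c5) $$ (-3) = 0"
  by (simp add: E1I_nth vb_TPI vb_TQI sum_unroll ; simp add: TPI_nth TQI_nth tpI_def tqI_def ;
      simp add: field_simps power2_eq_square power3_eq_cube)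

lemma E1I_T_8: "E1I a (TPI a c1 c2 c3 c4 c5) (TQI a c1 c2 c3 c4 c5) $$ (-2) = 0"
  by (simp add: E1I_nth vb_TPI vb_TQI sum_unroll ; simp add: TPI_nth TQI_nth tpI_def tqI_def ;
      simp add: field_simps power2_eq_square power3_eq_cube)

lemma E1I_T_9: "E1I a (TPI a c1 c2 c3 c4 c5) (TQI a c1 c2 c3 c4 c5) $$ (-1) = 0"
  by (simp add: E1I_nth vb_TPI vb_TQI sum_unroll ; simp add: TPI_nth TQI_nth tpI_def tqI_def ;
      simp add: field_simps power2_eq_square power3_eq_cube)

lemma E1I_T_10: "E1I a (TPI a c1 c2 c3 c4 c5) (TQI a c1 c2 c3 c4 c5) $$ 0 = 0"
  by (simp add: E1I_nth vb_TPI vb_TQI sum_unroll ; simp add: TPI_nth TQI_nth tpI_def tqI_def ;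
      simp add: field_simps power2_eq_square power3_eq_cube)

lemma E1I_T_11: "E1I a (TPI a c1 c2 c3 c4 c5) (TQI a c1 c2 c3 c4 c5) $$ 1 = 0"
  by (simp add: E1I_nth vb_TPI vb_TQI sum_unroll ; simp add: TPI_nth TQI_nth tpI_def tqI_def ;
      simp add: field_simps power2_eq_square power3_eq_cube)

lemma E1I_T_12: "E1I a (TPI a c1 c2 c3 c4 c5) (TQI a c1 c2 c3 c4 c5) $$ 2 = 0"
  by (simp add: E1I_nth vb_TPI vb_TQI sum_unroll ; simp add: TPI_nth TQI_nth tpI_def tqI_def ;
      simp add: field_simps power2_eq_square power3_eq_cube)

lemma E1I_T_13: "E1I a (TPI a c1 c2 c3 c4 c5) (TQI a c1 c2 c3 c4 c5) $$ 3 = 0"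
  by (simp add: E1I_nth vb_TPI vb_TQI sum_unroll ; simp add: TPI_nth TQI_nth tpI_def tqI_def ;
      simp add: field_simps power2_eq_square power3_eq_cube)

lemma E1I_T: assumes "j < 4" shows "E1I a (TPI a c1 c2 c3 c4 c5) (TQI a c1 c2 c3 c4 c5) $$ j = 0"
proof -
  have "j < -5 \<or> j = (-5) \<or> j = (-4) \<or> j = (-3) \<or> j = (-2) \<or> j = (-1) \<or> j = 0 \<or> j = 1 \<or> j = 2 \<or> j = 3" using assms by arith
  then show ?thesis
    by (elim disjE) (simp_all add: E1I_T_5 E1I_T_6 E1I_T_7 E1I_T_8 E1I_T_9 E1I_T_10 E1I_T_11 E1I_T_12 E1I_T_13 vbD[OF vb_E1I[OF vb_TPI vb_TQI]])
qed

lemma E2I_T_3: "E2I a (TPI a c1 c2 c3 c4 c5) (TQI a c1 c2 c3 c4 c5) $$ (-7) = 0"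
  by (simp add: E2I_nth vb_TPI vb_TQI sum_unroll ; simp add: TPI_nth TQI_nth tpI_def tqI_def ;
      simp add: field_simps power2_eq_square power3_eq_cube)

lemma E2I_T_4: "E2I a (TPI a c1 c2 c3 c4 c5) (TQI a c1 c2 c3 c4 c5) $$ (-6) = 0"
  by (simp add: E2I_nth vb_TPI vb_TQI sum_unroll ; simp add: TPI_nth TQI_nth tpI_def tqI_def ;
      simp add: field_simps power2_eq_square power3_eq_cube)

lemma E2I_T_5: "E2I a (TPI a c1 c2 c3 c4 c5) (TQI a c1 c2 c3 c4 c5) $$ (-5) = 0"
  by (simp add: E2I_nth vb_TPI vb_TQI sum_unroll ; simp add: TPI_nth TQI_nth tpI_def tqI_def ;
      simp add: field_simps power2_eq_square power3_eq_cube)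

lemma E2I_T_6: "E2I a (TPI a c1 c2 c3 c4 c5) (TQI a c1 c2 c3 c4 c5) $$ (-4) = 0"
  by (simp add: E2I_nth vb_TPI vb_TQI sum_unroll ; simp add: TPI_nth TQI_nth tpI_def tqI_def ;
      simp add: field_simps power2_eq_square power3_eq_cube)

lemma E2I_T_7: "E2I a (TPI a c1 c2 c3 c4 c5) (TQI a c1 c2 c3 c4 c5) $$ (-3) = 0"
  by (simp add: E2I_nth vb_TPI vb_TQI sum_unroll ; simp add: TPI_nth TQI_nth tpI_def tqI_def ;
      simp add: field_simps power2_eq_square power3_eq_cube)

lemma E2I_T_8: "E2I a (TPI a c1 c2 c3 c4 c5) (TQI a c1 c2 c3 c4 c5) $$ (-2) = 0"
  by (simp add: E2I_nth vb_TPI vb_TQI sum_unroll ; simp add: TPI_nth TQI_nth tpI_def tqI_def ;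
      simp add: field_simps power2_eq_square power3_eq_cube)

lemma E2I_T_9: "E2I a (TPI a c1 c2 c3 c4 c5) (TQI a c1 c2 c3 c4 c5) $$ (-1) = 0"
  by (simp add: E2I_nth vb_TPI vb_TQI sum_unroll ; simp add: TPI_nth TQI_nth tpI_def tqI_def ;
      simp add: field_simps power2_eq_square power3_eq_cube)

lemma E2I_T_10: "E2I a (TPI a c1 c2 c3 c4 c5) (TQI a c1 c2 c3 c4 c5) $$ 0 = 0"
  by (simp add: E2I_nth vb_TPI vb_TQI sum_unroll ; simp add: TPI_nth TQI_nth tpI_def tqI_def ;
      simp add: field_simps power2_eq_square power3_eq_cube)

lemma E2I_T_11: "E2I a (TPI a c1 c2 c3 c4 c5) (TQI a c1 c2 c3 c4 c5) $$ 1 = 0"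
  by (simp add: E2I_nth vb_TPI vb_TQI sum_unroll ; simp add: TPI_nth TQI_nth tpI_def tqI_def ;
      simp add: field_simps power2_eq_square power3_eq_cube)

lemma E2I_T: assumes "j < 2" shows "E2I a (TPI a c1 c2 c3 c4 c5) (TQI a c1 c2 c3 c4 c5) $$ j = 0"
proof -
  have "j < -7 \<or> j = (-7) \<or> j = (-6) \<or> j = (-5) \<or> j = (-4) \<or> j = (-3) \<or> j = (-2) \<or> j = (-1) \<or> j = 0 \<or> j = 1" using assms by arith
  then show ?thesis
    by (elim disjE) (simp_all add: E2I_T_3 E2I_T_4 E2I_T_5 E2I_T_6 E2I_T_7 E2I_T_8 E2I_T_9 E2I_T_10 E2I_T_11 vbD[OF vb_E2I[OF vb_TPI vb_TQI]])
qed

definition TPII where "TPII a c1 c2 c3 c4 c5 = Abs_fls (tpII a c1 c2 c3 c4 c5)"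
definition TQII where "TQII a c1 c2 c3 c4 c5 = Abs_fls (tqII a c1 c2 c3 c4 c5)"
lemma TPII_nth: "TPII a c1 c2 c3 c4 c5 $$ n = tpII a c1 c2 c3 c4 c5 n"
  unfolding TPII_def by (rule nth_Abs_fls_lower_bound[of "-2"]) (simp add: tpII_def)
lemma TQII_nth: "TQII a c1 c2 c3 c4 c5 $$ n = tqII a c1 c2 c3 c4 c5 n"
  unfolding TQII_def by (rule nth_Abs_fls_lower_bound[of "-4"]) (simp add: tqII_def)
lemma vb_TPII: "vb (TPII a c1 c2 c3 c4 c5) (-2)" by (simp add: vb_def TPII_nth tpII_def)
lemma vb_TQII: "vb (TQII a c1 c2 c3 c4 c5) (-4)" by (simp add: vb_def TQII_nth tqII_def)

lemma vb_E1II: "vb p (-2) \<Longrightarrow> vb q (-4) \<Longrightarrow> vb (E1II a p q) (-5)"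
  by (auto simp: vb_def E1II_nth sum_unroll(2))
lemma vb_E2II: "vb p (-2) \<Longrightarrow> vb q (-4) \<Longrightarrow> vb (E2II a p q) (-7)"
  by (auto simp: vb_def E2II_nth sum_unroll(2))

lemma E1II_T_5: "E1II a (TPII a c1 c2 c3 c4 c5) (TQII a c1 c2 c3 c4 c5) $$ (-5) = 0"
  by (simp add: E1II_nth vb_TPII vb_TQII sum_unroll ; simp add: TPII_nth TQII_nth tpII_def tqII_def ;
      simp add: field_simps power2_eq_square power3_eq_cube)

lemma E1II_T_6: "E1II a (TPII a c1 c2 c3 c4 c5) (TQII a c1 c2 c3 c4 c5) $$ (-4) = 0"
  by (simp add: E1II_nth vb_TPII vb_TQII sum_unroll ; simp add: TPII_nth TQII_nth tpII_def tqII_def ;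
      simp add: field_simps power2_eq_square power3_eq_cube)

lemma E1II_T_7: "E1II a (TPII a c1 c2 c3 c4 c5) (TQII a c1 c2 c3 c4 c5) $$ (-3) = 0"
  by (simp add: E1II_nth vb_TPII vb_TQII sum_unroll ; simp add: TPII_nth TQII_nth tpII_def tqII_def ;
      simp add: field_simps power2_eq_square power3_eq_cube)

lemma E1II_T_8: "E1II a (TPII a c1 c2 c3 c4 c5) (TQII a c1 c2 c3 c4 c5) $$ (-2) = 0"
  by (simp add: E1II_nth vb_TPII vb_TQII sum_unroll ; simp add: TPII_nth TQII_nth tpII_def tqII_def ;
      simp add: field_simps power2_eq_square power3_eq_cube)

lemma E1II_T_9: "E1II a (TPII a c1 c2 c3 c4 c5) (TQII a c1 c2 c3 c4 c5) $$ (-1) = 0"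
  by (simp add: E1II_nth vb_TPII vb_TQII sum_unroll ; simp add: TPII_nth TQII_nth tpII_def tqII_def ;
      simp add: field_simps power2_eq_square power3_eq_cube)

lemma E1II_T_10: "E1II a (TPII a c1 c2 c3 c4 c5) (TQII a c1 c2 c3 c4 c5) $$ 0 = 0"
  by (simp add: E1II_nth vb_TPII vb_TQII sum_unroll ; simp add: TPII_nth TQII_nth tpII_def tqII_def ;
      simp add: field_simps power2_eq_square power3_eq_cube)

lemma E1II_T_11: "E1II a (TPII a c1 c2 c3 c4 c5) (TQII a c1 c2 c3 c4 c5) $$ 1 = 0"
  by (simp add: E1II_nth vb_TPII vb_TQII sum_unroll ; simp add: TPII_nth TQII_nth tpII_def tqII_def ;
      simp add: field_simps power2_eq_square power3_eq_cube)

lemma E1II_T_12: "E1II a (TPII a c1 c2 c3 c4 c5) (TQII a c1 c2 c3 c4 c5) $$ 2 = 0"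
  by (simp add: E1II_nth vb_TPII vb_TQII sum_unroll ; simp add: TPII_nth TQII_nth tpII_def tqII_def ;
      simp add: field_simps power2_eq_square power3_eq_cube)

lemma E1II_T_13: "E1II a (TPII a c1 c2 c3 c4 c5) (TQII a c1 c2 c3 c4 c5) $$ 3 = 0"
  by (simp add: E1II_nth vb_TPII vb_TQII sum_unroll ; simp add: TPII_nth TQII_nth tpII_def tqII_def ;
      simp add: field_simps power2_eq_square power3_eq_cube)

lemma E1II_T_14: "E1II a (TPII a c1 c2 c3 c4 c5) (TQII a c1 c2 c3 c4 c5) $$ 4 = 0"
  by (simp add: E1II_nth vb_TPII vb_TQII sum_unroll ; simp add: TPII_nth TQII_nth tpII_def tqII_def ;
      simp add: field_simps power2_eq_square power3_eq_cube)

lemma E1II_T_15: "E1II a (TPII a c1 c2 c3 c4 c5) (TQII a c1 c2 c3 c4 c5) $$ 5 = 0"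
  by (simp add: E1II_nth vb_TPII vb_TQII sum_unroll ; simp add: TPII_nth TQII_nth tpII_def tqII_def ;
      simp add: field_simps power2_eq_square power3_eq_cube)

lemma E1II_T: assumes "j < 6" shows "E1II a (TPII a c1 c2 c3 c4 c5) (TQII a c1 c2 c3 c4 c5) $$ j = 0"
proof -
  have "j < -5 \<or> j = (-5) \<or> j = (-4) \<or> j = (-3) \<or> j = (-2) \<or> j = (-1) \<or> j = 0 \<or> j = 1 \<or> j = 2 \<or> j = 3 \<or> j = 4 \<or> j = 5" using assms by arith
  then show ?thesis
    by (elim disjE) (simp_all add: E1II_T_5 E1II_T_6 E1II_T_7 E1II_T_8 E1II_T_9 E1II_T_10 E1II_T_11 E1II_T_12 E1II_T_13 E1II_T_14 E1II_T_15 vbD[OF vb_E1II[OF vb_TPII vb_TQII]])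
qed

lemma E2II_T_3: "E2II a (TPII a c1 c2 c3 c4 c5) (TQII a c1 c2 c3 c4 c5) $$ (-7) = 0"
  by (simp add: E2II_nth vb_TPII vb_TQII sum_unroll ; simp add: TPII_nth TQII_nth tpII_def tqII_def ;
      simp add: field_simps power2_eq_square power3_eq_cube)

lemma E2II_T_4: "E2II a (TPII a c1 c2 c3 c4 c5) (TQII a c1 c2 c3 c4 c5) $$ (-6) = 0"
  by (simp add: E2II_nth vb_TPII vb_TQII sum_unroll ; simp add: TPII_nth TQII_nth tpII_def tqII_def ;
      simp add: field_simps power2_eq_square power3_eq_cube)

lemma E2II_T_5: "E2II a (TPII a c1 c2 c3 c4 c5) (TQII a c1 c2 c3 c4 c5) $$ (-5) = 0"
  by (simp add: E2II_nth vb_TPII vb_TQII sum_unroll ; simp add: TPII_nth TQII_nth tpII_def tqII_def ;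
      simp add: field_simps power2_eq_square power3_eq_cube)

lemma E2II_T_6: "E2II a (TPII a c1 c2 c3 c4 c5) (TQII a c1 c2 c3 c4 c5) $$ (-4) = 0"
  by (simp add: E2II_nth vb_TPII vb_TQII sum_unroll ; simp add: TPII_nth TQII_nth tpII_def tqII_def ;
      simp add: field_simps power2_eq_square power3_eq_cube)

lemma E2II_T_7: "E2II a (TPII a c1 c2 c3 c4 c5) (TQII a c1 c2 c3 c4 c5) $$ (-3) = 0"
  by (simp add: E2II_nth vb_TPII vb_TQII sum_unroll ; simp add: TPII_nth TQII_nth tpII_def tqII_def ;
      simp add: field_simps power2_eq_square power3_eq_cube)

lemma E2II_T_8: "E2II a (TPII a c1 c2 c3 c4 c5) (TQII a c1 c2 c3 c4 c5) $$ (-2) = 0"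
  by (simp add: E2II_nth vb_TPII vb_TQII sum_unroll ; simp add: TPII_nth TQII_nth tpII_def tqII_def ;
      simp add: field_simps power2_eq_square power3_eq_cube)

lemma E2II_T_9: "E2II a (TPII a c1 c2 c3 c4 c5) (TQII a c1 c2 c3 c4 c5) $$ (-1) = 0"
  by (simp add: E2II_nth vb_TPII vb_TQII sum_unroll ; simp add: TPII_nth TQII_nth tpII_def tqII_def ;
      simp add: field_simps power2_eq_square power3_eq_cube)

lemma E2II_T_10: "E2II a (TPII a c1 c2 c3 c4 c5) (TQII a c1 c2 c3 c4 c5) $$ 0 = 0"
  by (simp add: E2II_nth vb_TPII vb_TQII sum_unroll ; simp add: TPII_nth TQII_nth tpII_def tqII_def ;
      simp add: field_simps power2_eq_square power3_eq_cube)

lemma E2II_T_11: "E2II a (TPII a c1 c2 c3 c4 c5) (TQII a c1 c2 c3 c4 c5) $$ 1 = 0"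
  by (simp add: E2II_nth vb_TPII vb_TQII sum_unroll ; simp add: TPII_nth TQII_nth tpII_def tqII_def ;
      simp add: field_simps power2_eq_square power3_eq_cube)

lemma E2II_T_12: "E2II a (TPII a c1 c2 c3 c4 c5) (TQII a c1 c2 c3 c4 c5) $$ 2 = 0"
  by (simp add: E2II_nth vb_TPII vb_TQII sum_unroll ; simp add: TPII_nth TQII_nth tpII_def tqII_def ;
      simp add: field_simps power2_eq_square power3_eq_cube)

lemma E2II_T_13: "E2II a (TPII a c1 c2 c3 c4 c5) (TQII a c1 c2 c3 c4 c5) $$ 3 = 0"
  by (simp add: E2II_nth vb_TPII vb_TQII sum_unroll ; simp add: TPII_nth TQII_nth tpII_def tqII_def ;
      simp add: field_simps power2_eq_square power3_eq_cube)

lemma E2II_T: assumes "j < 4" shows "E2II a (TPII a c1 c2 c3 c4 c5) (TQII a c1 c2 c3 c4 c5) $$ j = 0"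
proof -
  have "j < -7 \<or> j = (-7) \<or> j = (-6) \<or> j = (-5) \<or> j = (-4) \<or> j = (-3) \<or> j = (-2) \<or> j = (-1) \<or> j = 0 \<or> j = 1 \<or> j = 2 \<or> j = 3" using assms by arith
  then show ?thesis
    by (elim disjE) (simp_all add: E2II_T_3 E2II_T_4 E2II_T_5 E2II_T_6 E2II_T_7 E2II_T_8 E2II_T_9 E2II_T_10 E2II_T_11 E2II_T_12 E2II_T_13 vbD[OF vb_E2II[OF vb_TPII vb_TQII]])
qed





lemma detI:
  assumes "7 \<le> k"
  shows "complex_of_int (k*(k-1)*(k-2) - 6*(k-2)) * complex_of_int ((k-2)*(k-3)*(k-4) - 12*(k-2))
       - complex_of_int (48 + 12*k*(k-4)) * complex_of_int (-3*(k-2)) \<noteq> 0"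
proof -
  have e: "(k*(k-1)*(k-2) - 6*(k-2)) * ((k-2)*(k-3)*(k-4) - 12*(k-2)) - (48 + 12*k*(k-4)) * (-3*(k-2))
      = (k+3)*(k-1)*((k-2)*(k-2))*(k-4)*(k-6)" by (simp add: algebra_simps)
  have "(k+3)*(k-1)*((k-2)*(k-2))*(k-4)*(k-6) > 0" using assms by (simp add: mult_pos_pos)
  then have "(k*(k-1)*(k-2) - 6*(k-2)) * ((k-2)*(k-3)*(k-4) - 12*(k-2)) - (48 + 12*k*(k-4)) * (-3*(k-2)) \<noteq> 0"
    unfolding e by linarith
  then have h: "(k*(k-1)*(k-2) - 6*(k-2)) * ((k-2)*(k-3)*(k-4) - 12*(k-2)) - (48 + 12*k*(k-4)) * (-3*(k-2)) \<noteq> 0" .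
  have c: "complex_of_int (k*(k-1)*(k-2) - 6*(k-2)) * complex_of_int ((k-2)*(k-3)*(k-4) - 12*(k-2)) - complex_of_int (48 + 12*k*(k-4)) * complex_of_int (-3*(k-2)) = complex_of_int ((k*(k-1)*(k-2) - 6*(k-2)) * ((k-2)*(k-3)*(k-4) - 12*(k-2)) - (48 + 12*k*(k-4)) * (-3*(k-2)))" by simp
  show ?thesis unfolding c of_int_eq_0_iff using h .
qed

lemma detII:
  assumes "9 \<le> k"
  shows "complex_of_int (k*(k-1)*(k-2) - 6*(k-2)) * complex_of_int ((k-2)*(k-3)*(k-4) - 24*(k-2) + 24)
       - complex_of_int (96 - 12*k) * complex_of_int (-3*(k-2)) \<noteq> 0"
proof -
  have e: "(k*(k-1)*(k-2) - 6*(k-2)) * ((k-2)*(k-3)*(k-4) - 24*(k-2) + 24) - (96 - 12*k) * (-3*(k-2))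
      = (k+3)*k*(k-1)*(k-2)*(k-4)*(k-8)" by (simp add: algebra_simps)
  have "(k+3)*k*(k-1)*(k-2)*(k-4)*(k-8) > 0" using assms by (simp add: mult_pos_pos)
  then have "(k*(k-1)*(k-2) - 6*(k-2)) * ((k-2)*(k-3)*(k-4) - 24*(k-2) + 24) - (96 - 12*k) * (-3*(k-2)) \<noteq> 0"
    unfolding e by linarith
  then have h: "(k*(k-1)*(k-2) - 6*(k-2)) * ((k-2)*(k-3)*(k-4) - 24*(k-2) + 24) - (96 - 12*k) * (-3*(k-2)) \<noteq> 0" .
  have c: "complex_of_int (k*(k-1)*(k-2) - 6*(k-2)) * complex_of_int ((k-2)*(k-3)*(k-4) - 24*(k-2) + 24) - complex_of_int (96 - 12*k) * complex_of_int (-3*(k-2)) = complex_of_int ((k*(k-1)*(k-2) - 6*(k-2)) * ((k-2)*(k-3)*(k-4) - 24*(k-2) + 24) - (96 - 12*k) * (-3*(k-2)))" by simp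
  show ?thesis unfolding c of_int_eq_0_iff using h .
qed

lemma sixI: "six_param_laurent sysI"
  unfolding six_param_laurent_def
proof (intro exI[of _ "[(True,1),(True,2),(False,0),(True,4),(True,6)]"] conjI allI impI)
  fix a :: complex and cs :: "complex list"
  assume len: "length cs = 5"
  define c1 c2 c3 c4 c5 where "c1 = cs!0" "c2 = cs!1" "c3 = cs!2" "c4 = cs!3" "c5 = cs!4"
  have "\<exists>p q. E1I a p q = 0 \<and> E2I a p q = 0 \<and> vb p (-2) \<and> vb q (-4) \<and> p $$ (-2) = 1
     \<and> (\<forall>i<7. p $$ i = TPI a c1 c2 c3 c4 c5 $$ i) \<and> (\<forall>i<7-2. q $$ i = TQI a c1 c2 c3 c4 c5 $$ i)"
  proof (rule build[where Fa = "E1I a" and Fb = "E2I a" and ap = 1 and bq = 1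
      and Aa = "\<lambda>k. of_int (k*(k-1)*(k-2) - 6*(k-2))" and Ba = "\<lambda>k. of_int (-3*(k-2))"
      and Ab = "\<lambda>k. of_int (48 + 12*k*(k-4))" and Bb = "\<lambda>k. of_int ((k-2)*(k-3)*(k-4) - 12*(k-2))"])
    show "E1I a (p+u) (q+v) $$ j = E1I a p q $$ j" if "vb p (-2)" "vb q (-4)" "vb u L" "vb v (L-2)" "0 \<le> L" "j < L-3" for p q u v L j
      using E1I_local[OF that] .
    show "E2I a (p+u) (q+v) $$ j = E2I a p q $$ j" if "vb p (-2)" "vb q (-4)" "vb u L" "vb v (L-2)" "0 \<le> L" "j < L-5" for p q u v L j
      using E2I_local[OF that] .
    show "E1I a (p + mon x k) (q + mon y (k-2)) $$ (k-3) = E1I a p q $$ (k-3) + of_int (k*(k-1)*(k-2) - 6*(k-2)) * x + of_int (-3*(k-2)) * y"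
      if "p $$ (-2) = 1" "q $$ (-4) = 1" "1 \<le> k" for p q x y k using E1I_split[OF that] .
    show "E2I a (p + mon x k) (q + mon y (k-2)) $$ (k-5) = E2I a p q $$ (k-5) + of_int (48 + 12*k*(k-4)) * x + of_int ((k-2)*(k-3)*(k-4) - 12*(k-2)) * y"
      if "p $$ (-2) = 1" "q $$ (-4) = 1" "1 \<le> k" for p q x y k using E2I_split[OF that] .
    show "complex_of_int (k*(k-1)*(k-2) - 6*(k-2)) * complex_of_int ((k-2)*(k-3)*(k-4) - 12*(k-2))
       - complex_of_int (48 + 12*k*(k-4)) * complex_of_int (-3*(k-2)) \<noteq> 0" if "7 \<le> k" for k
      using detI[OF that] .
  qed (auto simp: vb_TPI vb_TQI TPI_nth TQI_nth tpI_def tqI_def E1I_T E2I_T)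
  then obtain p q where pq: "E1I a p q = 0" "E2I a p q = 0" "vb p (-2)" "vb q (-4)" "p $$ (-2) = 1"
    "\<forall>i<7. p $$ i = TPI a c1 c2 c3 c4 c5 $$ i" "\<forall>i<5. q $$ i = TQI a c1 c2 c3 c4 c5 $$ i" by auto
  have "sysI a p q" using pq by (simp add: sysI_iff)
  moreover have "laurent_shape p q" using pq by (auto simp: laurent_shape_def vb_def)
  moreover have "\<forall>j<5. coeff_at p q ([(True,1),(True,2),(False,0),(True,4),(True,6)] ! j) = cs ! j"
  proof (intro allI impI)
    fix j :: nat assume "j < 5"
    then have "j = 0 \<or> j = 1 \<or> j = 2 \<or> j = 3 \<or> j = 4" by arith
    then show "coeff_at p q ([(True,1),(True,2),(False,0),(True,4),(True,6)] ! j) = cs ! j"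
      using pq(6,7) by (auto simp: coeff_at_def TPI_nth TQI_nth tpI_def tqI_def c1_c2_c3_c4_c5_def)
  qed
  ultimately show "\<exists>p q. sysI a p q \<and> laurent_shape p q \<and>
      (\<forall>j<5. coeff_at p q ([(True,1),(True,2),(False,0),(True,4),(True,6)] ! j) = cs ! j)" by blast
qed auto

lemma sixII: "six_param_laurent sysII"
  unfolding six_param_laurent_def
proof (intro exI[of _ "[(True,0),(True,1),(True,2),(True,4),(True,8)]"] conjI allI impI)
  fix a :: complex and cs :: "complex list"
  assume len: "length cs = 5"
  define c1 c2 c3 c4 c5 where "c1 = cs!0" "c2 = cs!1" "c3 = cs!2" "c4 = cs!3" "c5 = cs!4"
  have "\<exists>p q. E1II a p q = 0 \<and> E2II a p q = 0 \<and> vb p (-2) \<and> vb q (-4) \<and> p $$ (-2) = 2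
     \<and> (\<forall>i<9. p $$ i = TPII a c1 c2 c3 c4 c5 $$ i) \<and> (\<forall>i<9-2. q $$ i = TQII a c1 c2 c3 c4 c5 $$ i)"
  proof (rule build[where Fa = "E1II a" and Fb = "E2II a" and ap = 2 and bq = 2
      and Aa = "\<lambda>k. of_int (k*(k-1)*(k-2) - 6*(k-2))" and Ba = "\<lambda>k. of_int (-3*(k-2))"
      and Ab = "\<lambda>k. of_int (96 - 12*k)" and Bb = "\<lambda>k. of_int ((k-2)*(k-3)*(k-4) - 24*(k-2) + 24)"])
    show "E1II a (p+u) (q+v) $$ j = E1II a p q $$ j" if "vb p (-2)" "vb q (-4)" "vb u L" "vb v (L-2)" "0 \<le> L" "j < L-3" for p q u v L j
      using E1II_local[OF that] .
    show "E2II a (p+u) (q+v) $$ j = E2II a p q $$ j" if "vb p (-2)" "vb q (-4)" "vb u L" "vb v (L-2)" "0 \<le> L" "j < L-5" for p q u v L j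
      using E2II_local[OF that] .
    show "E1II a (p + mon x k) (q + mon y (k-2)) $$ (k-3) = E1II a p q $$ (k-3) + of_int (k*(k-1)*(k-2) - 6*(k-2)) * x + of_int (-3*(k-2)) * y"
      if "p $$ (-2) = 2" "q $$ (-4) = 2" "1 \<le> k" for p q x y k using E1II_split[OF that] .
    show "E2II a (p + mon x k) (q + mon y (k-2)) $$ (k-5) = E2II a p q $$ (k-5) + of_int (96 - 12*k) * x + of_int ((k-2)*(k-3)*(k-4) - 24*(k-2) + 24) * y"
      if "p $$ (-2) = 2" "q $$ (-4) = 2" "1 \<le> k" for p q x y k using E2II_split[OF that] .
    show "complex_of_int (k*(k-1)*(k-2) - 6*(k-2)) * complex_of_int ((k-2)*(k-3)*(k-4) - 24*(k-2) + 24)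
       - complex_of_int (96 - 12*k) * complex_of_int (-3*(k-2)) \<noteq> 0" if "9 \<le> k" for k
      using detII[OF that] .
  qed (auto simp: vb_TPII vb_TQII TPII_nth TQII_nth tpII_def tqII_def E1II_T E2II_T)
  then obtain p q where pq: "E1II a p q = 0" "E2II a p q = 0" "vb p (-2)" "vb q (-4)" "p $$ (-2) = 2"
    "\<forall>i<9. p $$ i = TPII a c1 c2 c3 c4 c5 $$ i" "\<forall>i<7. q $$ i = TQII a c1 c2 c3 c4 c5 $$ i" by auto
  have "sysII a p q" using pq by (simp add: sysII_iff)
  moreover have "laurent_shape p q" using pq by (auto simp: laurent_shape_def vb_def)
  moreover have "\<forall>j<5. coeff_at p q ([(True,0),(True,1),(True,2),(True,4),(True,8)] ! j) = cs ! j"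
  proof (intro allI impI)
    fix j :: nat assume "j < 5"
    then have "j = 0 \<or> j = 1 \<or> j = 2 \<or> j = 3 \<or> j = 4" by arith
    then show "coeff_at p q ([(True,0),(True,1),(True,2),(True,4),(True,8)] ! j) = cs ! j"
      using pq(6,7) by (auto simp: coeff_at_def TPII_nth TQII_nth tpII_def tqII_def c1_c2_c3_c4_c5_def)
  qed
  ultimately show "\<exists>p q. sysII a p q \<and> laurent_shape p q \<and>
      (\<forall>j<5. coeff_at p q ([(True,0),(True,1),(True,2),(True,4),(True,8)] ! j) = cs ! j)" by blast
qed auto

theorem proposition2:
  shows "six_param_laurent sysI \<and> six_param_laurent sysII"
  using sixI sixII by blast


end
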